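(* Let $k$ be a field. In $\operatorname{Fun}(\Gamma_-^o,k)$, let $P=s_2$ and let $\eta:s_2\to s_1=k$ be the canonical map. Let $P_\bullet$ be the complex with $P_i=P^{\otimes i}$ ($P_0=k$) and differential $d_i:P_i\to P_{i-1}$, $$d_i=\sum_{1\le j\le i}(-1)^j\,\operatorname{id}^{\otimes(j-1)}\otimes\eta\otimes\operatorname{id}^{\otimes(i-j)}.$$ Then $P_\bullet$ is a projective resolution of $t_1$ in $\operatorname{Fun}(\Gamma_-^o,k)$.
   Context: $\Gamma_-$ is the category of finite non-empty sets and surjective maps; $[n]$ denotes a set with $n$ elements. $s_n\in\operatorname{Fun}(\Gamma_-^o,k)$ is the functor represented by $[n]$: $s_n([m])=k[\Gamma_-([m],[n])]$; thus $s_1$ is the constant functor $k$, and the unique maps $[n]\to[1]$ give canonical maps $s_n\to s_1$. $t_1\in\operatorname{Fun}(\Gamma_-^o,k)$ is the functor co-represented by $[1]$: $t_1([1])=k$, $t_1([n])=0$ for $n\ge2$; it is a quotient of $s_1=k$, which gives the augmentation $P_0=k\to t_1$. Tensor products are pointwise. *)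

theory Defs
  imports Complex_Main "HOL-Library.FuncSet" "HOL-Library.Function_Algebras"
begin

(* Gamma_-: objects [m] = {0..<m}, m >= 1; morphisms = surjections *)
definition surjs :: "nat \<Rightarrow> nat \<Rightarrow> (nat \<Rightarrow> nat) set" where
  "surjs m n = {f. f \<in> {0..<m} \<rightarrow>\<^sub>E {0..<n} \<and> f ` {0..<m} = {0..<n}}"

definition lin_on :: "('k::field \<Rightarrow> 'a::ab_group_add \<Rightarrow> 'a) \<Rightarrow> ('k \<Rightarrow> 'b::ab_group_add \<Rightarrow> 'b)
    \<Rightarrow> 'a set \<Rightarrow> ('a \<Rightarrow> 'b) \<Rightarrow> bool" where
  "lin_on s1 s2 A h \<longleftrightarrow> (\<forall>x\<in>A. \<forall>y\<in>A. h (x + y) = h x + h y) \<and> (\<forall>c. \<forall>x\<in>A. h (s1 c x) = s2 c (h x))"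

(* An object of Fun(Gamma_-^o, k): for each m>=1 a k-vector space F m (a subspace of an
   ambient k-vector space 'a), and for each surjection f:[m]->[n] a linear map
   Fm m n f : F n -> F m, functorially (contravariantly). *)
definition is_functor :: "('k::field \<Rightarrow> 'a::ab_group_add \<Rightarrow> 'a) \<Rightarrow> (nat \<Rightarrow> 'a set)
    \<Rightarrow> (nat \<Rightarrow> nat \<Rightarrow> (nat \<Rightarrow> nat) \<Rightarrow> 'a \<Rightarrow> 'a) \<Rightarrow> bool" where
  "is_functor s F Fm \<longleftrightarrow>
     vector_space s \<and>
     (\<forall>m\<ge>1. 0 \<in> F m \<and> (\<forall>x\<in>F m. \<forall>y\<in>F m. x + y \<in> F m) \<and> (\<forall>c. \<forall>x\<in>F m. s c x \<in> F m)) \<and>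
     (\<forall>m n f. m \<ge> 1 \<longrightarrow> n \<ge> 1 \<longrightarrow> f \<in> surjs m n \<longrightarrow>
        (\<forall>x\<in>F n. Fm m n f x \<in> F m) \<and> lin_on s s (F n) (Fm m n f)) \<and>
     (\<forall>m\<ge>1. \<forall>x\<in>F m. Fm m m (restrict id {0..<m}) x = x) \<and>
     (\<forall>l m n f g. l \<ge> 1 \<longrightarrow> m \<ge> 1 \<longrightarrow> n \<ge> 1 \<longrightarrow> f \<in> surjs l m \<longrightarrow> g \<in> surjs m n \<longrightarrow>
        (\<forall>x\<in>F n. Fm l n (restrict (g \<circ> f) {0..<l}) x = Fm l m f (Fm m n g x)))"

definition nat_trans :: "('k::field \<Rightarrow> 'a::ab_group_add \<Rightarrow> 'a) \<Rightarrow> (nat \<Rightarrow> 'a set)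
    \<Rightarrow> (nat \<Rightarrow> nat \<Rightarrow> (nat \<Rightarrow> nat) \<Rightarrow> 'a \<Rightarrow> 'a)
    \<Rightarrow> ('k \<Rightarrow> 'b::ab_group_add \<Rightarrow> 'b) \<Rightarrow> (nat \<Rightarrow> 'b set)
    \<Rightarrow> (nat \<Rightarrow> nat \<Rightarrow> (nat \<Rightarrow> nat) \<Rightarrow> 'b \<Rightarrow> 'b) \<Rightarrow> (nat \<Rightarrow> 'a \<Rightarrow> 'b) \<Rightarrow> bool" where
  "nat_trans sF F Fm sG G Gm \<theta> \<longleftrightarrow>
     (\<forall>m\<ge>1. (\<forall>x\<in>F m. \<theta> m x \<in> G m) \<and> lin_on sF sG (F m) (\<theta> m)) \<and>
     (\<forall>m n f. m \<ge> 1 \<longrightarrow> n \<ge> 1 \<longrightarrow> f \<in> surjs m n \<longrightarrow>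
        (\<forall>x\<in>F n. \<theta> m (Fm m n f x) = Gm m n f (\<theta> n x)))"

(* lifting property of F against all epimorphisms G -> H (epi = pointwise surjective) *)
definition proj_against :: "('k::field \<Rightarrow> 'a::ab_group_add \<Rightarrow> 'a) \<Rightarrow> (nat \<Rightarrow> 'a set)
    \<Rightarrow> (nat \<Rightarrow> nat \<Rightarrow> (nat \<Rightarrow> nat) \<Rightarrow> 'a \<Rightarrow> 'a)
    \<Rightarrow> ('k \<Rightarrow> 'b::ab_group_add \<Rightarrow> 'b) \<Rightarrow> (nat \<Rightarrow> 'b set)
    \<Rightarrow> (nat \<Rightarrow> nat \<Rightarrow> (nat \<Rightarrow> nat) \<Rightarrow> 'b \<Rightarrow> 'b)
    \<Rightarrow> ('k \<Rightarrow> 'c::ab_group_add \<Rightarrow> 'c) \<Rightarrow> (nat \<Rightarrow> 'c set)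
    \<Rightarrow> (nat \<Rightarrow> nat \<Rightarrow> (nat \<Rightarrow> nat) \<Rightarrow> 'c \<Rightarrow> 'c) \<Rightarrow> bool" where
  "proj_against sF F Fm sG G Gm sH H Hm \<longleftrightarrow>
     (is_functor sG G Gm \<longrightarrow> is_functor sH H Hm \<longrightarrow>
      (\<forall>\<pi> \<phi>. nat_trans sG G Gm sH H Hm \<pi> \<longrightarrow> (\<forall>m\<ge>1. \<pi> m ` G m = H m) \<longrightarrow>
          nat_trans sF F Fm sH H Hm \<phi> \<longrightarrow>
          (\<exists>\<psi>. nat_trans sF F Fm sG G Gm \<psi> \<and> (\<forall>m\<ge>1. \<forall>x\<in>F m. \<pi> m (\<psi> m x) = \<phi> m x))))"

(* P_i = s_2^{\<otimes> i}: P_i([m]) = k[Gamma_-([m],[2])]^{\<otimes> i} = k[Gamma_-([m],[2])^i],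
   elements = coefficient functions on lists of length i of surjections [m]->[2] *)
definition basis :: "nat \<Rightarrow> nat \<Rightarrow> (nat \<Rightarrow> nat) list set" where
  "basis m i = {fs. length fs = i \<and> set fs \<subseteq> surjs m 2}"

definition pscale :: "'k::field \<Rightarrow> ((nat \<Rightarrow> nat) list \<Rightarrow> 'k) \<Rightarrow> ((nat \<Rightarrow> nat) list \<Rightarrow> 'k)" where
  "pscale c v = (\<lambda>x. c * v x)"

definition Pobj :: "nat \<Rightarrow> nat \<Rightarrow> ((nat \<Rightarrow> nat) list \<Rightarrow> 'k::field) set" where
  "Pobj i m = {c. \<forall>fs. fs \<notin> basis m i \<longrightarrow> c fs = 0}"

definition Pmap :: "nat \<Rightarrow> nat \<Rightarrow> nat \<Rightarrow> (nat \<Rightarrow> nat) \<Rightarrow> ((nat \<Rightarrow> nat) list \<Rightarrow> 'k::field)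
    \<Rightarrow> ((nat \<Rightarrow> nat) list \<Rightarrow> 'k)" where
  "Pmap i m n g c = (\<lambda>hs. \<Sum>fs\<in>basis n i.
      if map (\<lambda>f. restrict (f \<circ> g) {0..<m}) fs = hs then c fs else 0)"

definition del_at :: "nat \<Rightarrow> 'a list \<Rightarrow> 'a list" where
  "del_at j xs = take j xs @ drop (Suc j) xs"

(* d_i = \<Sum>_{1\<le>j\<le>i} (-1)^j id^{j-1} \<otimes> \<eta> \<otimes> id^{i-j}; since \<eta>(e_f) = 1 this sends
   e_{(f_1..f_i)} to \<Sum>_j (-1)^j e_{(f_1..f_{j-1},f_{j+1}..f_i)} *)
definition d :: "nat \<Rightarrow> nat \<Rightarrow> ((nat \<Rightarrow> nat) list \<Rightarrow> 'k::field) \<Rightarrow> ((nat \<Rightarrow> nat) list \<Rightarrow> 'k)" where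
  "d i m c = (\<lambda>gs. \<Sum>fs\<in>basis m i. \<Sum>j\<in>{1..i}.
      if del_at (j - 1) fs = gs then (-1) ^ j * c fs else 0)"

definition t1obj :: "nat \<Rightarrow> 'k::field set" where
  "t1obj m = (if m = 1 then UNIV else {0})"

definition t1map :: "nat \<Rightarrow> nat \<Rightarrow> (nat \<Rightarrow> nat) \<Rightarrow> 'k::field \<Rightarrow> 'k" where
  "t1map m n g x = (if m = 1 \<and> n = 1 then x else 0)"

definition aug :: "nat \<Rightarrow> ((nat \<Rightarrow> nat) list \<Rightarrow> 'k::field) \<Rightarrow> 'k" where
  "aug m c = (if m = 1 then c [] else 0)"

end

theory Submission
  imports Defs "HOL-Library.Countable"
begin


lemma sum_fun_apply: "(sum f A) x = (\<Sum>a\<in>A. f a x)"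
  by (induction A rule: infinite_finite_induct) auto

lemma finite_surjs: "finite (surjs m n)"
proof -
  have "surjs m n \<subseteq> {0..<m} \<rightarrow>\<^sub>E {0..<n}" by (auto simp: surjs_def)
  thus ?thesis by (rule finite_subset) (simp add: finite_PiE)
qed

lemma finite_basis: "finite (basis m i)"
proof -
  have "basis m i = {xs. set xs \<subseteq> surjs m 2 \<and> length xs = i}" by (auto simp: basis_def)
  thus ?thesis using finite_lists_length_eq[OF finite_surjs] by simp
qed

lemma surjs_le: assumes "f \<in> surjs m n" shows "n \<le> m"
proof -
  have "card (f ` {0..<m}) \<le> m" using card_image_le[of "{0..<m}" f] by simp
  thus ?thesis using assms by (simp add: surjs_def)
qed

lemma surjs_1_2: "surjs 1 2 = {}" using surjs_le by fastforce

lemma basis_1: "i \<ge> 1 \<Longrightarrow> basis 1 i = {}"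
  by (cases i) (auto simp: basis_def surjs_1_2[simplified] subset_empty)

lemma basis_0: "basis m 0 = {[]}" by (auto simp: basis_def)

lemma surjs_ex2: assumes "m \<ge> 2" shows "restrict (\<lambda>x. if x = 0 then 0 else 1) {0..<m} \<in> surjs m 2"
proof -
  have "(\<lambda>x. if x = 0 then 0 else 1) ` {0..<m} = {0..<(2::nat)}"
  proof
    show "{0..<2} \<subseteq> (\<lambda>x. if x = 0 then 0 else 1::nat) ` {0..<m}"
    proof
      fix b :: nat assume "b \<in> {0..<2}"
      then have "b = 0 \<or> b = 1" by auto
      then show "b \<in> (\<lambda>x. if x = 0 then 0 else 1::nat) ` {0..<m}"
        using assms by (auto intro!: image_eqI[of _ _ 0] image_eqI[of _ _ 1])
    qed
  qed auto
  thus ?thesis by (auto simp: surjs_def)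
qed

definition bv :: "(nat \<Rightarrow> nat) list \<Rightarrow> ((nat \<Rightarrow> nat) list \<Rightarrow> 'k::field)" where
  "bv fs = (\<lambda>hs. if hs = fs then 1 else 0)"

lemma bv_Pobj: "fs \<in> basis m i \<Longrightarrow> bv fs \<in> Pobj i m"
  by (auto simp: bv_def Pobj_def)

lemma Pobj_0: "0 \<in> Pobj i m" and Pobj_add: "x \<in> Pobj i m \<Longrightarrow> y \<in> Pobj i m \<Longrightarrow> x + y \<in> Pobj i m"
  and Pobj_scale: "x \<in> Pobj i m \<Longrightarrow> pscale a x \<in> Pobj i m"
  and Pobj_neg: "x \<in> Pobj i m \<Longrightarrow> - x \<in> Pobj i m"
  by (auto simp: Pobj_def pscale_def)

lemma Pobj_sum: "(\<And>a. a \<in> S \<Longrightarrow> f a \<in> Pobj i m) \<Longrightarrow> sum f S \<in> Pobj i m"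
  by (induction S rule: infinite_finite_induct) (auto intro: Pobj_0 Pobj_add)

lemma decomp: assumes "c \<in> Pobj i m"
  shows "c = (\<Sum>fs\<in>basis m i. pscale (c fs) (bv fs))"
proof
  fix hs
  have "(\<Sum>fs\<in>basis m i. pscale (c fs) (bv fs)) hs = (\<Sum>fs\<in>basis m i. if hs = fs then c hs else 0)"
    by (auto simp add: sum_fun_apply pscale_def bv_def intro!: sum.cong)
  also have "\<dots> = c hs" using assms finite_basis[of m i] by (auto simp: Pobj_def)
  finally show "c hs = (\<Sum>fs\<in>basis m i. pscale (c fs) (bv fs)) hs" by simp
qed

lemma lin_on_zero: assumes "lin_on s1 s2 A h" "0 \<in> A" shows "h 0 = 0"
proof -
  have "h (0 + 0) = h 0 + h 0" using assms unfolding lin_on_def by blast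
  then have "h 0 = h 0 + h 0" by simp
  thus ?thesis by simp
qed

lemma lin_on_sum: assumes "lin_on s1 s2 A h" "0 \<in> A" "\<And>x y. x \<in> A \<Longrightarrow> y \<in> A \<Longrightarrow> x + y \<in> A"
  and "\<And>a. a \<in> S \<Longrightarrow> f a \<in> A"
  shows "h (sum f S) = (\<Sum>a\<in>S. h (f a)) \<and> sum f S \<in> A"
  using assms(4)
proof (induction S rule: infinite_finite_induct)
  case (infinite A) then show ?case using lin_on_zero[OF assms(1,2)] assms(2) by simp
next
  case empty then show ?case using lin_on_zero[OF assms(1,2)] assms(2) by simp
next
  case (insert x F)
  then have "f x \<in> A" "h (sum f F) = (\<Sum>a\<in>F. h (f a))" "sum f F \<in> A" by auto
  have "h (f x + sum f F) = h (f x) + h (sum f F)" using assms(1) \<open>f x \<in> A\<close> \<open>sum f F \<in> A\<close>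
    unfolding lin_on_def by blast
  then show ?case using insert(1,2) assms(3) \<open>f x \<in> A\<close> \<open>sum f F \<in> A\<close> \<open>h (sum f F) = _\<close> by simp
qed

lemma lin_decomp: assumes "lin_on pscale s2 (Pobj i m) h" "c \<in> Pobj i m"
  shows "h c = (\<Sum>fs\<in>basis m i. s2 (c fs) (h (bv fs)))"
proof -
  have "h c = h (\<Sum>fs\<in>basis m i. pscale (c fs) (bv fs))" using decomp[OF assms(2)] by simp
  also have "\<dots> = (\<Sum>fs\<in>basis m i. h (pscale (c fs) (bv fs)))"
  proof -
    have "\<And>fs. fs \<in> basis m i \<Longrightarrow> pscale (c fs) (bv fs) \<in> Pobj i m"
      by (rule Pobj_scale[OF bv_Pobj])
    from lin_on_sum[OF assms(1) Pobj_0 Pobj_add this] show ?thesis by (rule conjunct1)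
  qed
  also have "\<dots> = (\<Sum>fs\<in>basis m i. s2 (c fs) (h (bv fs)))"
  proof (rule sum.cong[OF refl])
    fix fs assume "fs \<in> basis m i"
    then have "bv fs \<in> Pobj i m" by (rule bv_Pobj)
    then show "h (pscale (c fs) (bv fs)) = s2 (c fs) (h (bv fs))" using assms(1) unfolding lin_on_def by blast
  qed
  finally show ?thesis .
qed

lemma lin_unique: assumes "lin_on pscale s2 (Pobj i m) h1" "lin_on pscale s2 (Pobj i m) h2"
  "\<And>fs. fs \<in> basis m i \<Longrightarrow> h1 (bv fs) = h2 (bv fs)" "c \<in> Pobj i m"
  shows "h1 c = h2 c"
  using lin_decomp[OF assms(1,4)] lin_decomp[OF assms(2,4)] assms(3) by simp

definition plin :: "(((nat \<Rightarrow> nat) list \<Rightarrow> 'k::field) \<Rightarrow> ((nat \<Rightarrow> nat) list \<Rightarrow> 'k)) \<Rightarrow> bool" where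
  "plin h \<longleftrightarrow> (\<forall>x y. h (x + y) = h x + h y) \<and> (\<forall>a x. h (pscale a x) = pscale a (h x))"

lemma plin_lin_on: "plin h \<Longrightarrow> lin_on pscale pscale A h"
  by (simp add: plin_def lin_on_def)

lemma plin_neg: assumes "plin h" shows "h (- x) = - h x"
proof -
  have "- x = pscale (-1) x" by (auto simp: pscale_def)
  then have "h (- x) = pscale (-1) (h x)" using assms by (simp add: plin_def)
  thus ?thesis by (auto simp: pscale_def)
qed

lemma plin_zero: "plin h \<Longrightarrow> h 0 = 0"
  using lin_on_zero[OF plin_lin_on, of h UNIV] by simp

lemma plin_diff: assumes "plin h" shows "h (x - y) = h x - h y"
proof -
  have "h (x - y) = h (x + (- y))" by simp
  also have "\<dots> = h x + h (- y)" using assms unfolding plin_def by blast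
  also have "\<dots> = h x - h y" using plin_neg[OF assms] by simp
  finally show ?thesis .
qed

lemma plin_comp: "plin h \<Longrightarrow> plin g \<Longrightarrow> plin (\<lambda>x. h (g x))" by (simp add: plin_def)
lemma plin_id: "plin (\<lambda>x. x)" by (simp add: plin_def)
lemma plin_0: "plin (\<lambda>x. 0)" by (simp add: plin_def pscale_def fun_eq_iff)
lemma plin_minus: "plin h \<Longrightarrow> plin g \<Longrightarrow> plin (\<lambda>x. h x - g x)"
  by (simp add: plin_def pscale_def fun_eq_iff algebra_simps)
lemma plin_uminus: "plin h \<Longrightarrow> plin (\<lambda>x. - h x)"
  by (simp add: plin_def pscale_def fun_eq_iff algebra_simps)



definition mapc :: "nat \<Rightarrow> (nat \<Rightarrow> nat) \<Rightarrow> (nat \<Rightarrow> nat) list \<Rightarrow> (nat \<Rightarrow> nat) list" where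
  "mapc m g fs = map (\<lambda>f. restrict (f \<circ> g) {0..<m}) fs"

lemma surjs_comp: assumes "g \<in> surjs m n" "f \<in> surjs n k"
  shows "restrict (f \<circ> g) {0..<m} \<in> surjs m k"
proof -
  have "restrict (f \<circ> g) {0..<m} ` {0..<m} = f ` g ` {0..<m}" by auto
  also have "\<dots> = {0..<k}" using assms by (simp add: surjs_def)
  finally show ?thesis using assms by (auto simp: surjs_def PiE_iff)
qed

lemma mapc_basis: "g \<in> surjs m n \<Longrightarrow> fs \<in> basis n i \<Longrightarrow> mapc m g fs \<in> basis m i"
  by (auto simp: mapc_def basis_def intro: surjs_comp)

lemma Pmap_bv: assumes "gs \<in> basis n i"
  shows "Pmap i m n g (bv gs) = bv (mapc m g gs)"
proof
  fix hs
  have "Pmap i m n g (bv gs) hs = (\<Sum>fs\<in>basis n i. if fs = gs then (if mapc m g gs = hs then 1 else 0) else 0)"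
    unfolding Pmap_def bv_def mapc_def by (rule sum.cong) auto
  also have "\<dots> = bv (mapc m g gs) hs" using assms finite_basis[of n i] by (auto simp: bv_def)
  finally show "Pmap i m n g (bv gs) hs = bv (mapc m g gs) hs" .
qed

lemma plin_Pmap: "plin (Pmap i m n g)"
  unfolding plin_def Pmap_def pscale_def fun_eq_iff
  by (auto simp: sum.distrib[symmetric] sum_distrib_left intro!: sum.cong)

lemma Pmap_Pobj: assumes "g \<in> surjs m n" shows "Pmap i m n g c \<in> Pobj i m"
  using mapc_basis[OF assms] unfolding Pobj_def Pmap_def mapc_def[symmetric]
  by (auto intro!: sum.neutral)

lemma d_bv: assumes "hs \<in> basis m i"
  shows "d i m (bv hs) = (\<lambda>gs. \<Sum>j\<in>{1..i}. if del_at (j - 1) hs = gs then (-1) ^ j else 0)"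
proof
  fix gs
  have "d i m (bv hs) gs = (\<Sum>j\<in>{1..i}. \<Sum>fs\<in>basis m i. if fs = hs then (if del_at (j - 1) hs = gs then (-1) ^ j else 0) else 0)"
    unfolding d_def bv_def by (subst sum.swap) (auto intro!: sum.cong)
  also have "\<dots> = (\<Sum>j\<in>{1..i}. if del_at (j - 1) hs = gs then (-1) ^ j else 0)"
    using assms finite_basis[of m i] by simp
  finally show "d i m (bv hs) gs = (\<Sum>j\<in>{1..i}. if del_at (j - 1) hs = gs then (-1) ^ j else 0)" .
qed

lemma plin_d: "plin (d i m)"
  unfolding plin_def d_def pscale_def fun_eq_iff
  by (auto simp: sum.distrib[symmetric] sum_distrib_left algebra_simps intro!: sum.cong)

lemma del_at_basis: assumes "fs \<in> basis m (Suc i)" "j \<le> i" shows "del_at j fs \<in> basis m i"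
  using assms set_take_subset[of j fs] set_drop_subset[of "Suc j" fs]
  by (auto simp: basis_def del_at_def)

lemma d_Pobj: "d (Suc i) m c \<in> Pobj i m"
proof -
  have "del_at (j - 1) fs \<noteq> gs" if "gs \<notin> basis m i" "fs \<in> basis m (Suc i)" "j \<in> {1..Suc i}" for fs gs j
  proof -
    have "j - 1 \<le> i" using that(3) by auto
    thus ?thesis using del_at_basis[OF that(2), of "j - 1"] that(1) by auto
  qed
  then have "d (Suc i) m c gs = 0" if "gs \<notin> basis m i" for gs
    unfolding d_def using that by (intro sum.neutral ballI) auto
  thus ?thesis unfolding Pobj_def by blast
qed

lemma d_0: "d 0 m c = 0" by (auto simp: d_def fun_eq_iff)

definition hc :: "(nat \<Rightarrow> nat) \<Rightarrow> ((nat \<Rightarrow> nat) list \<Rightarrow> 'k::field) \<Rightarrow> ((nat \<Rightarrow> nat) list \<Rightarrow> 'k)" where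
  "hc s c = (\<lambda>gs. case gs of [] \<Rightarrow> 0 | g # gs' \<Rightarrow> if g = s then c gs' else 0)"

lemma plin_hc: "plin (hc s)"
  by (auto simp: plin_def hc_def pscale_def fun_eq_iff split: list.split)

lemma hc_bv: "hc s (bv fs) = bv (s # fs)"
  by (auto simp: hc_def bv_def fun_eq_iff split: list.split)

lemma hc_Pobj: "s \<in> surjs m 2 \<Longrightarrow> c \<in> Pobj i m \<Longrightarrow> hc s c \<in> Pobj (Suc i) m"
  by (auto simp: hc_def Pobj_def basis_def split: list.split)

lemma del_at_cons: "j \<ge> 1 \<Longrightarrow> del_at j (s # fs) = s # del_at (j - 1) fs"
  by (cases j) (auto simp: del_at_def)

lemma cons_formula: assumes "rest \<in> basis m i" "s \<in> surjs m 2"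
  shows "d (Suc i) m (bv (s # rest) :: _ \<Rightarrow> 'k::field) = - bv rest - hc s (d i m (bv rest))"
proof
  fix gs
  have sb: "s # rest \<in> basis m (Suc i)" using assms by (auto simp: basis_def)
  have "d (Suc i) m (bv (s # rest)) gs
     = (\<Sum>j\<in>{1..Suc i}. if del_at (j - 1) (s # rest) = gs then (-1) ^ j else 0)"
    by (simp add: d_bv[OF sb])
  also have "\<dots> = (if rest = gs then -1 else 0) + (\<Sum>j\<in>{Suc 1..Suc i}. if del_at (j - 1) (s # rest) = gs then (-1) ^ j else 0)"
    by (subst sum.atLeast_Suc_atMost) (auto simp: del_at_def)
  also have "(\<Sum>j\<in>{Suc 1..Suc i}. if del_at (j - 1) (s # rest) = gs then (-1) ^ j else (0::'k))
     = (\<Sum>j\<in>{1..i}. if s # del_at (j - 1) rest = gs then - ((-1) ^ j) else (0::'k))"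
    by (subst sum.shift_bounds_cl_Suc_ivl) (auto intro!: sum.cong simp: del_at_cons algebra_simps)
  also have "(\<Sum>j\<in>{1..i}. if s # del_at (j - 1) rest = gs then - ((-1) ^ j) else 0) = - hc s (d i m (bv rest)) gs"
    by (auto simp: hc_def d_bv[OF assms(1)] sum_negf[symmetric] intro!: sum.cong split: list.split)
  finally have X: "d (Suc i) m (bv (s # rest)) gs = (if rest = gs then -1 else (0::'k)) + - hc s (d i m (bv rest)) gs" .
  have "bv rest gs = (if rest = gs then 1 else (0::'k))" by (auto simp: bv_def)
  then show "d (Suc i) m (bv (s # rest)) gs = ((- bv rest - hc s (d i m (bv rest))) gs :: 'k)"
    using X by (cases "rest = gs") (simp_all add: bv_def)
qed



lemma plin_sum: "plin h \<Longrightarrow> h (sum f S) = (\<Sum>a\<in>S. h (f a))"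
  using lin_on_sum[OF plin_lin_on[of h UNIV]] by auto

lemma plin_unique: "plin h1 \<Longrightarrow> plin h2 \<Longrightarrow> (\<And>fs. fs \<in> basis m i \<Longrightarrow> h1 (bv fs) = h2 (bv fs))
  \<Longrightarrow> c \<in> Pobj i m \<Longrightarrow> h1 c = h2 c"
  by (rule lin_unique[OF plin_lin_on plin_lin_on])

lemma mapc_id: assumes "fs \<in> basis m i" shows "mapc m (restrict id {0..<m}) fs = fs"
proof -
  have "restrict (f \<circ> restrict id {0..<m}) {0..<m} = f" if "f \<in> surjs m 2" for f
    using that by (auto simp: surjs_def PiE_iff extensional_def fun_eq_iff)
  thus ?thesis using assms by (auto simp: mapc_def basis_def intro!: map_idI)
qed

lemma mapc_comp: assumes "f \<in> surjs l m" "g \<in> surjs m n"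
  shows "mapc l (restrict (g \<circ> f) {0..<l}) fs = mapc l f (mapc m g fs)"
  using assms by (auto simp: mapc_def surjs_def PiE_iff fun_eq_iff)

lemma vs_pscale: "vector_space (pscale :: 'k::field \<Rightarrow> _)"
  by unfold_locales (auto simp: pscale_def fun_eq_iff algebra_simps)

lemma P_functor: "is_functor pscale (Pobj i :: nat \<Rightarrow> ((nat \<Rightarrow> nat) list \<Rightarrow> 'k::field) set) (Pmap i)"
  unfolding is_functor_def
proof (intro conjI allI impI ballI)
  show "vector_space (pscale :: 'k \<Rightarrow> _)" by (rule vs_pscale)
next
  fix m n f x assume "f \<in> surjs m n" 
  then show "Pmap i m n f x \<in> Pobj i m" by (rule Pmap_Pobj)
next
  fix m n f show "lin_on pscale pscale (Pobj i n) (Pmap i m n f :: _ \<Rightarrow> _ \<Rightarrow> 'k)"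
    by (rule plin_lin_on[OF plin_Pmap])
next
  fix m and x :: "_ \<Rightarrow> 'k" assume x: "x \<in> Pobj i m"
  show "Pmap i m m (restrict id {0..<m}) x = x"
    by (rule plin_unique[OF plin_Pmap plin_id _ x]) (simp add: Pmap_bv mapc_id)
next
  fix l m n f g and x :: "_ \<Rightarrow> 'k" assume a: "f \<in> surjs l m" "g \<in> surjs m n" "x \<in> Pobj i n"
  show "Pmap i l n (restrict (g \<circ> f) {0..<l}) x = Pmap i l m f (Pmap i m n g x)"
    by (rule plin_unique[OF plin_Pmap plin_comp[OF plin_Pmap plin_Pmap] _ a(3)])
       (simp add: Pmap_bv mapc_comp[OF a(1,2)] mapc_basis[OF a(2)])
qed (auto intro: Pobj_0 Pobj_add Pobj_scale)

lemma d_bv': assumes "hs \<in> basis m i"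
  shows "d i m (bv hs) = (\<Sum>j\<in>{1..i}. pscale ((-1) ^ j) (bv (del_at (j - 1) hs)))"
  unfolding d_bv[OF assms] by (auto simp: fun_eq_iff sum_fun_apply pscale_def bv_def intro!: sum.cong)

lemma mapc_del: "mapc m f (del_at j fs) = del_at j (mapc m f fs)"
  by (simp add: mapc_def del_at_def take_map drop_map)

lemma d_nat: "nat_trans pscale (Pobj (Suc i) :: nat \<Rightarrow> ((nat \<Rightarrow> nat) list \<Rightarrow> 'k::field) set) (Pmap (Suc i))
                     pscale (Pobj i) (Pmap i) (d (Suc i))"
  unfolding nat_trans_def
proof (intro conjI allI impI ballI)
  fix m x show "d (Suc i) m (x :: _ \<Rightarrow> 'k) \<in> Pobj i m" by (rule d_Pobj)
next
  fix m show "lin_on pscale pscale (Pobj (Suc i) m) (d (Suc i) m :: _ \<Rightarrow> _ \<Rightarrow> 'k)"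
    by (rule plin_lin_on[OF plin_d])
next
  fix m n f and x :: "_ \<Rightarrow> 'k" assume a: "f \<in> surjs m n" "x \<in> Pobj (Suc i) n"
  show "d (Suc i) m (Pmap (Suc i) m n f x) = Pmap i m n f (d (Suc i) n x)"
  proof (rule plin_unique[OF plin_comp[OF plin_d plin_Pmap] plin_comp[OF plin_Pmap plin_d] _ a(2)])
    fix fs assume fs: "fs \<in> basis n (Suc i)"
    have "Pmap i m n f (d (Suc i) n (bv fs :: _ \<Rightarrow> 'k))
       = (\<Sum>j\<in>{1..Suc i}. Pmap i m n f (pscale ((-1) ^ j) (bv (del_at (j - 1) fs))))"
      unfolding d_bv'[OF fs] plin_sum[OF plin_Pmap] by (rule refl)
    also have "\<dots> = (\<Sum>j\<in>{1..Suc i}. pscale ((-1) ^ j) (bv (del_at (j - 1) (mapc m f fs))))"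
    proof (rule sum.cong[OF refl])
      fix j assume "j \<in> {1..Suc i}"
      then have "j - 1 \<le> i" by auto
      then have b: "del_at (j - 1) fs \<in> basis n i" using del_at_basis[OF fs] by blast
      show "Pmap i m n f (pscale ((-1) ^ j) (bv (del_at (j - 1) fs) :: _ \<Rightarrow> 'k)) = pscale ((-1) ^ j) (bv (del_at (j - 1) (mapc m f fs)))"
      proof -
        have sc: "Pmap i m n f (pscale c x) = pscale c (Pmap i m n f x)" for c and x :: "_ \<Rightarrow> 'k"
          using plin_Pmap unfolding plin_def by blast
        show ?thesis unfolding sc Pmap_bv[OF b] mapc_del ..
      qed
    qed
    also have "\<dots> = d (Suc i) m (Pmap (Suc i) m n f (bv fs))"
      unfolding Pmap_bv[OF fs] d_bv'[OF mapc_basis[OF a(1) fs]] ..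
    finally show "d (Suc i) m (Pmap (Suc i) m n f (bv fs)) = Pmap i m n f (d (Suc i) n (bv fs :: _ \<Rightarrow> 'k))"
      by simp
  qed
qed

lemma homotopy: assumes "s \<in> surjs m 2" "y \<in> Pobj i m"
  shows "d (Suc i) m (hc s y) = - y - hc s (d i m (y :: _ \<Rightarrow> 'k::field))"
  by (rule plin_unique[OF plin_comp[OF plin_d plin_hc] plin_minus[OF plin_uminus[OF plin_id] plin_comp[OF plin_hc plin_d]] _ assms(2)])
     (simp only: hc_bv cons_formula[OF _ assms(1)])

lemma dd: "c \<in> Pobj (Suc i) m \<Longrightarrow> d i m (d (Suc i) m (c :: _ \<Rightarrow> 'k::field)) = 0"
proof (induction i arbitrary: c)
  case 0 then show ?case by (simp add: d_0)
next
  case (Suc i)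
  show ?case
  proof (rule plin_unique[OF plin_comp[OF plin_d plin_d] plin_0 _ Suc.prems])
    fix fs assume fs: "fs \<in> basis m (Suc (Suc i))"
    then obtain s rest where e: "fs = s # rest" and s: "s \<in> surjs m 2" and r: "rest \<in> basis m (Suc i)"
      by (cases fs) (auto simp: basis_def)
    define y where "y = d (Suc i) m (bv rest :: _ \<Rightarrow> 'k)"
    have y: "y \<in> Pobj i m" unfolding y_def by (rule d_Pobj)
    have dy: "d i m y = 0" unfolding y_def by (rule Suc.IH[OF bv_Pobj[OF r]])
    have "d (Suc i) m (d (Suc (Suc i)) m (bv fs)) = d (Suc i) m (- bv rest - hc s y)"
      by (simp add: e cons_formula[OF r s] y_def)
    also have "\<dots> = - y - d (Suc i) m (hc s y)"
      by (simp add: plin_diff[OF plin_d] plin_neg[OF plin_d] y_def)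
    also have "\<dots> = 0" by (simp add: homotopy[OF s y] dy plin_zero[OF plin_hc])
    finally show "d (Suc i) m (d (Suc (Suc i)) m (bv fs)) = (0 :: _ \<Rightarrow> 'k)" .
  qed
qed



lemma t1_functor: "is_functor ((*) :: 'k::field \<Rightarrow> 'k \<Rightarrow> 'k) t1obj t1map"
  unfolding is_functor_def
proof (intro conjI allI impI ballI)
  show "vector_space ((*) :: 'k \<Rightarrow> 'k \<Rightarrow> 'k)" by unfold_locales (auto simp: algebra_simps)
next
  fix l m n f g and x :: 'k assume a: "1 \<le> l" "1 \<le> m" "1 \<le> n" "f \<in> surjs l m" "g \<in> surjs m n" "x \<in> t1obj n"
  have "m \<le> l" "n \<le> m" using surjs_le a(4,5) by auto
  then show "t1map l n (restrict (g \<circ> f) {0..<l}) x = t1map l m f (t1map m n g x)"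
    using a(1-3) by (auto simp: t1map_def)
qed (auto simp: t1obj_def t1map_def lin_on_def split: if_splits)

lemma Pmap0: "Pmap 0 m n f x [] = x []"
  by (simp add: Pmap_def basis_0)

lemma aug_nat: "nat_trans pscale (Pobj 0 :: nat \<Rightarrow> ((nat \<Rightarrow> nat) list \<Rightarrow> 'k::field) set) (Pmap 0) (*) t1obj t1map aug"
  unfolding nat_trans_def
proof (intro conjI allI impI ballI)
  fix m n f and x :: "_ \<Rightarrow> 'k" assume a: "1 \<le> m" "1 \<le> n" "f \<in> surjs m n" "x \<in> Pobj 0 n"
  have "n \<le> m" using surjs_le a(3) by auto
  then show "aug m (Pmap 0 m n f x) = t1map m n f (aug n x)"
    using a(1,2) by (auto simp: aug_def t1map_def Pmap0)
qed (auto simp: aug_def t1obj_def lin_on_def pscale_def)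

lemma aug_image: assumes "m \<ge> 1" shows "aug m ` (Pobj 0 m :: ((nat \<Rightarrow> nat) list \<Rightarrow> 'k::field) set) = t1obj m"
proof (cases "m = 1")
  case True
  have "a \<in> aug 1 ` (Pobj 0 1 :: ((nat \<Rightarrow> nat) list \<Rightarrow> 'k) set)" for a :: 'k
  proof -
    have "pscale a (bv []) \<in> (Pobj 0 1 :: ((nat \<Rightarrow> nat) list \<Rightarrow> 'k) set)"
      by (rule Pobj_scale[OF bv_Pobj]) (simp add: basis_0)
    then show ?thesis by (rule image_eqI[rotated]) (simp add: aug_def pscale_def bv_def)
  qed
  then show ?thesis using True by (auto simp: t1obj_def)
next
  case False
  have "(0 :: (nat \<Rightarrow> nat) list \<Rightarrow> 'k) \<in> Pobj 0 m" by (rule Pobj_0)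
  then show ?thesis using False by (auto simp: aug_def t1obj_def)
qed

lemma Pobj_1: "i \<ge> 1 \<Longrightarrow> Pobj i 1 = {0}"
  using basis_1[simplified] by (auto simp: Pobj_def fun_eq_iff)

lemma exact0: assumes "m \<ge> 1"
  shows "{c \<in> (Pobj 0 m :: ((nat \<Rightarrow> nat) list \<Rightarrow> 'k::field) set). aug m c = 0} = d 1 m ` Pobj 1 m"
proof (cases "m = 1")
  case True
  have "{c \<in> (Pobj 0 m :: ((nat \<Rightarrow> nat) list \<Rightarrow> 'k) set). aug m c = 0} = {0}"
    using True by (auto simp: aug_def Pobj_def basis_0 fun_eq_iff) (metis)
  moreover have "d 1 m ` (Pobj 1 m :: ((nat \<Rightarrow> nat) list \<Rightarrow> 'k) set) = {0}"
  proof -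
    have "(Pobj 1 m :: ((nat \<Rightarrow> nat) list \<Rightarrow> 'k) set) = {0}" using True Pobj_1[of 1] by simp
    then show ?thesis using plin_zero[OF plin_d] by simp
  qed
  ultimately show ?thesis by simp
next
  case False
  then have m2: "m \<ge> 2" using assms by auto
  define s :: "nat \<Rightarrow> nat" where "s = restrict (\<lambda>x. if x = 0 then 0 else 1) {0..<m}"
  have s: "s \<in> surjs m 2" unfolding s_def by (rule surjs_ex2[OF m2])
  have "c \<in> d 1 m ` Pobj 1 m" if c: "c \<in> (Pobj 0 m :: ((nat \<Rightarrow> nat) list \<Rightarrow> 'k) set)" for c
  proof
    show "hc s (- c) \<in> Pobj 1 m" using hc_Pobj[OF s Pobj_neg[OF c]] by simp
    show "c = d 1 m (hc s (- c))" using homotopy[OF s Pobj_neg[OF c]] by (simp add: d_0 plin_zero[OF plin_hc])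
  qed
  then show ?thesis using False d_Pobj[of 0 m] by (auto simp: aug_def)
qed

lemma exact: assumes "m \<ge> 1" "i \<ge> 1"
  shows "{c \<in> (Pobj i m :: ((nat \<Rightarrow> nat) list \<Rightarrow> 'k::field) set). d i m c = 0} = d (Suc i) m ` Pobj (Suc i) m"
proof
  show "d (Suc i) m ` Pobj (Suc i) m \<subseteq> {c \<in> (Pobj i m :: ((nat \<Rightarrow> nat) list \<Rightarrow> 'k) set). d i m c = 0}"
    using d_Pobj dd by blast
next
  show "{c \<in> (Pobj i m :: ((nat \<Rightarrow> nat) list \<Rightarrow> 'k) set). d i m c = 0} \<subseteq> d (Suc i) m ` Pobj (Suc i) m"
  proof (cases "m = 1")
    case True
    have "(0 :: (nat \<Rightarrow> nat) list \<Rightarrow> 'k) \<in> d (Suc i) m ` Pobj (Suc i) m"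
      using plin_zero[OF plin_d] Pobj_0 by (metis image_eqI)
    moreover have "(Pobj i m :: ((nat \<Rightarrow> nat) list \<Rightarrow> 'k) set) = {0}" using True Pobj_1[of i] assms by simp
    ultimately show ?thesis by auto
  next
    case False
    then have m2: "m \<ge> 2" using assms by auto
    define s :: "nat \<Rightarrow> nat" where "s = restrict (\<lambda>x. if x = 0 then 0 else 1) {0..<m}"
    have s: "s \<in> surjs m 2" unfolding s_def by (rule surjs_ex2[OF m2])
    show ?thesis
    proof
      fix c :: "_ \<Rightarrow> 'k" assume "c \<in> {c \<in> Pobj i m. d i m c = 0}"
      then have c: "c \<in> Pobj i m" "d i m c = 0" by auto
      show "c \<in> d (Suc i) m ` Pobj (Suc i) m"
      proof
        show "hc s (- c) \<in> Pobj (Suc i) m" using hc_Pobj[OF s Pobj_neg[OF c(1)]] .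
        show "c = d (Suc i) m (hc s (- c))" using homotopy[OF s Pobj_neg[OF c(1)]] c(2)
          by (simp add: plin_neg[OF plin_d] plin_zero[OF plin_hc])
      qed
    qed
  qed
qed



definition vec :: "(nat \<Rightarrow> nat) list \<Rightarrow> nat \<Rightarrow> nat list" where
  "vec fs x = map (\<lambda>f. f x) fs"

definition VV :: "nat \<Rightarrow> (nat \<Rightarrow> nat) list \<Rightarrow> nat list set" where
  "VV m fs = vec fs ` {0..<m}"

definition rk :: "nat list set \<Rightarrow> nat list \<Rightarrow> nat" where
  "rk V v = card {w \<in> V. to_nat w < to_nat v}"

definition qq :: "nat \<Rightarrow> (nat \<Rightarrow> nat) list \<Rightarrow> nat \<Rightarrow> nat" where
  "qq m fs = restrict (\<lambda>x. rk (VV m fs) (vec fs x)) {0..<m}"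

definition gens :: "nat \<Rightarrow> nat list set \<Rightarrow> (nat \<Rightarrow> nat) list" where
  "gens i V = map (\<lambda>j. restrict (\<lambda>y. inv_into V (rk V) y ! j) {0..<card V}) [0..<i]"

lemma rk_lt: assumes "finite V" "v \<in> V" "w \<in> V" "to_nat v < to_nat w" shows "rk V v < rk V w"
  unfolding rk_def
proof (rule psubset_card_mono)
  show "finite {u \<in> V. to_nat u < to_nat w}" using assms(1) by simp
  show "{u \<in> V. to_nat u < to_nat v} \<subset> {u \<in> V. to_nat u < to_nat w}"
    using assms(2-4) by auto
qed

lemma rk_bij: assumes "finite V" shows "bij_betw (rk V) V {0..<card V}"
proof -
  have inj: "inj_on (rk V) V"
  proof (rule inj_onI)
    fix v w assume vw: "v \<in> V" "w \<in> V" "rk V v = rk V w"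
    show "v = w"
    proof (rule ccontr)
      assume "v \<noteq> w"
      then have "to_nat v \<noteq> to_nat w" by simp
      then have "to_nat v < to_nat w \<or> to_nat w < to_nat v" by arith
      then show False using rk_lt[OF assms] vw by (metis less_irrefl)
    qed
  qed
  have sub: "rk V ` V \<subseteq> {0..<card V}"
  proof
    fix y assume "y \<in> rk V ` V"
    then obtain v where v: "v \<in> V" "y = rk V v" by auto
    have "{w \<in> V. to_nat w < to_nat v} \<subset> V" using v(1) by auto
    then have "rk V v < card V" unfolding rk_def by (rule psubset_card_mono[OF assms])
    then show "y \<in> {0..<card V}" using v by simp
  qed
  have "card (rk V ` V) = card {0..<card V}" using card_image[OF inj] by simp
  then have "rk V ` V = {0..<card V}" using sub by (intro card_subset_eq) auto
  then show ?thesis using inj by (simp add: bij_betw_def)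
qed

lemma VV_finite: "finite (VV m fs)" by (simp add: VV_def)

lemma VV_card: "m \<ge> 1 \<Longrightarrow> card (VV m fs) \<ge> 1"
  by (simp add: VV_def Suc_le_eq card_gt_0_iff)

lemma rk_image: "rk (VV m fs) ` VV m fs = {0..<card (VV m fs)}"
  using rk_bij[OF VV_finite] by (simp add: bij_betw_def)

lemma rk_inj: "inj_on (rk (VV m fs)) (VV m fs)"
  using rk_bij[OF VV_finite] by (simp add: bij_betw_def)

lemma qq_surjs: "qq m fs \<in> surjs m (card (VV m fs))"
proof -
  have "qq m fs ` {0..<m} = rk (VV m fs) ` VV m fs" by (auto simp: qq_def VV_def)
  then show ?thesis using rk_image[of m fs] by (auto simp: surjs_def qq_def VV_def)
qed

lemma inv_rk: assumes "x < m" shows "inv_into (VV m fs) (rk (VV m fs)) (rk (VV m fs) (vec fs x)) = vec fs x"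
  using rk_inj assms by (auto simp: VV_def)

lemma gens_basis: assumes "fs \<in> basis m i" shows "gens i (VV m fs) \<in> basis (card (VV m fs)) i"
proof -
  let ?V = "VV m fs" let ?t = "card (VV m fs)"
  have "restrict (\<lambda>y. inv_into ?V (rk ?V) y ! j) {0..<?t} \<in> surjs ?t 2" if j: "j < i" for j
  proof -
    have fj: "fs ! j \<in> surjs m 2" using assms j by (auto simp: basis_def)
    have val: "inv_into ?V (rk ?V) (rk ?V (vec fs x)) ! j = (fs ! j) x" if "x < m" for x
      using inv_rk[OF that] assms j by (simp add: vec_def basis_def)
    have inV: "inv_into ?V (rk ?V) y \<in> ?V" if "y < ?t" for y
      using inv_into_into[of y "rk ?V" ?V] rk_image[of m fs] that by auto
    have ran: "inv_into ?V (rk ?V) y ! j < 2" if y: "y < ?t" for y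
    proof -
      obtain x where x: "x < m" "inv_into ?V (rk ?V) y = vec fs x" using inV[OF y] by (auto simp: VV_def)
      have "(fs ! j) x < 2" using fj x(1) by (auto simp: surjs_def PiE_iff)
      then show ?thesis using x assms j by (simp add: vec_def basis_def)
    qed
    let ?F = "\<lambda>y. inv_into ?V (rk ?V) y ! j"
    have sup: "{0..<2} \<subseteq> ?F ` {0..<?t}"
    proof
      fix b assume b: "b \<in> {0..<(2::nat)}"
      have "b \<in> (fs ! j) ` {0..<m}" using fj b by (simp add: surjs_def)
      then obtain x where x: "x < m" "(fs ! j) x = b" by auto
      have lt: "rk ?V (vec fs x) < ?t" using rk_image[of m fs] x(1) by (auto simp: VV_def)
      have "?F (rk ?V (vec fs x)) = b" using val[OF x(1)] x(2) by simp
      then show "b \<in> ?F ` {0..<?t}" using lt by (intro image_eqI[of _ _ "rk ?V (vec fs x)"]) auto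
    qed
    have pi: "restrict ?F {0..<?t} \<in> {0..<?t} \<rightarrow>\<^sub>E {0..<2}" using ran by auto
    have "restrict ?F {0..<?t} ` {0..<?t} = ?F ` {0..<?t}" by auto
    also have "\<dots> = {0..<2}" using sup ran by auto
    finally show ?thesis using pi unfolding surjs_def by blast
  qed
  then show ?thesis by (auto simp: gens_def basis_def)
qed

lemma mapc_gens: assumes "fs \<in> basis m i" shows "mapc m (qq m fs) (gens i (VV m fs)) = fs"
proof (rule nth_equalityI)
  show "length (mapc m (qq m fs) (gens i (VV m fs))) = length fs"
    using assms by (simp add: mapc_def gens_def basis_def)
next
  fix j assume "j < length (mapc m (qq m fs) (gens i (VV m fs)))"
  then have j: "j < i" by (simp add: mapc_def gens_def)
  have fj: "fs ! j \<in> surjs m 2" using assms j by (auto simp: basis_def)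
  show "mapc m (qq m fs) (gens i (VV m fs)) ! j = fs ! j"
  proof
    fix x
    show "(mapc m (qq m fs) (gens i (VV m fs)) ! j) x = (fs ! j) x"
    proof (cases "x < m")
      case True
      have "rk (VV m fs) (vec fs x) < card (VV m fs)" using rk_image[of m fs] True by (auto simp: VV_def)
      then show ?thesis using True j inv_rk[OF True, of fs] assms
        by (simp add: mapc_def gens_def qq_def vec_def basis_def)
    next
      case False
      then show ?thesis using j fj by (simp add: mapc_def gens_def surjs_def PiE_iff extensional_def)
    qed
  qed
qed

lemma vec_mapc: "x < m \<Longrightarrow> vec (mapc m g fs) x = vec fs (g x)"
  by (simp add: vec_def mapc_def)

lemma VV_mapc: assumes "g \<in> surjs m n" shows "VV m (mapc m g fs) = VV n fs"
proof -
  have "VV m (mapc m g fs) = vec fs ` g ` {0..<m}" by (auto simp: VV_def vec_mapc image_iff)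
  then show ?thesis using assms by (simp add: surjs_def VV_def)
qed

lemma qq_mapc: assumes "g \<in> surjs m n" shows "qq m (mapc m g fs) = restrict (qq n fs \<circ> g) {0..<m}"
  using assms by (auto simp: qq_def VV_mapc vec_mapc surjs_def PiE_iff fun_eq_iff)



lemma closed_sum: assumes "0 \<in> A" "\<And>x y. x \<in> A \<Longrightarrow> y \<in> A \<Longrightarrow> x + y \<in> A" "\<And>a. a \<in> S \<Longrightarrow> f a \<in> A"
  shows "sum f S \<in> A"
  using assms(3) by (induction S rule: infinite_finite_induct) (auto intro: assms(1,2))

lemma lin_on_comp: assumes "lin_on s1 s2 A h" "lin_on s2 s3 B g" "\<And>x. x \<in> A \<Longrightarrow> h x \<in> B"
  "\<And>x y. x \<in> A \<Longrightarrow> y \<in> A \<Longrightarrow> x + y \<in> A" "\<And>c x. x \<in> A \<Longrightarrow> s1 c x \<in> A"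
  shows "lin_on s1 s3 A (\<lambda>x. g (h x))"
  using assms unfolding lin_on_def by auto

lemma proj: "proj_against pscale (Pobj i :: nat \<Rightarrow> ((nat \<Rightarrow> nat) list \<Rightarrow> 'k::field) set) (Pmap i) sG G Gm sH H Hm"
  unfolding proj_against_def
proof (intro impI allI)
  fix \<pi> \<phi>
  assume fG: "is_functor sG G Gm" and fH: "is_functor sH H Hm"
    and pi: "nat_trans sG G Gm sH H Hm \<pi>" and surj: "\<forall>m\<ge>1. \<pi> m ` G m = H m"
    and phi: "nat_trans pscale (Pobj i :: nat \<Rightarrow> ((nat \<Rightarrow> nat) list \<Rightarrow> 'k) set) (Pmap i) sH H Hm \<phi>"
  interpret vG: vector_space sG using fG by (simp add: is_functor_def)
  have G0: "0 \<in> G m" and Gadd: "x \<in> G m \<Longrightarrow> y \<in> G m \<Longrightarrow> x + y \<in> G m"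
    and Gsc: "x \<in> G m \<Longrightarrow> sG c x \<in> G m" if "m \<ge> 1" for m x y c
    using fG that by (auto simp: is_functor_def)
  have Gmap: "Gm m n f x \<in> G m" and Glin: "lin_on sG sG (G n) (Gm m n f)"
    if "m \<ge> 1" "n \<ge> 1" "f \<in> surjs m n" "x \<in> G n" for m n f x
    using fG that unfolding is_functor_def by blast+
  have Gcomp: "Gm l n (restrict (g \<circ> f) {0..<l}) x = Gm l m f (Gm m n g x)"
    if "l \<ge> 1" "m \<ge> 1" "n \<ge> 1" "f \<in> surjs l m" "g \<in> surjs m n" "x \<in> G n" for l m n f g x
    using fG that unfolding is_functor_def by blast
  have piG: "\<pi> m x \<in> H m" and pilin: "lin_on sG sH (G m) (\<pi> m)" if "m \<ge> 1" "x \<in> G m" for m x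
    using pi that unfolding nat_trans_def by blast+
  have pinat: "\<pi> m (Gm m n f x) = Hm m n f (\<pi> n x)"
    if "m \<ge> 1" "n \<ge> 1" "f \<in> surjs m n" "x \<in> G n" for m n f x
    using pi that unfolding nat_trans_def by blast
  have phiH: "\<phi> m x \<in> H m" and philin: "lin_on pscale sH (Pobj i m) (\<phi> m)"
    if "m \<ge> 1" "x \<in> Pobj i m" for m x
    using phi that unfolding nat_trans_def by blast+
  have phinat: "\<phi> m (Pmap i m n f x) = Hm m n f (\<phi> n x)"
    if "m \<ge> 1" "n \<ge> 1" "f \<in> surjs m n" "x \<in> Pobj i n" for m n f x
    using phi that unfolding nat_trans_def by blast

  define gen where "gen V = (SOME g. g \<in> G (card V) \<and> \<pi> (card V) g = \<phi> (card V) (bv (gens i V) :: _ \<Rightarrow> 'k))" for V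
  define X where "X m fs = Gm m (card (VV m fs)) (qq m fs) (gen (VV m fs))" for m fs
  define \<psi> where "\<psi> m c = (\<Sum>fs\<in>basis m i. sG (c fs) (X m fs))" for m and c :: "_ \<Rightarrow> 'k"

  have gen: "gen (VV m fs) \<in> G (card (VV m fs)) \<and> \<pi> (card (VV m fs)) (gen (VV m fs)) = \<phi> (card (VV m fs)) (bv (gens i (VV m fs)))"
    if "m \<ge> 1" "fs \<in> basis m i" for m fs
  proof -
    let ?t = "card (VV m fs)"
    have t: "?t \<ge> 1" using VV_card[OF that(1)] .
    have "\<phi> ?t (bv (gens i (VV m fs))) \<in> H ?t" using phiH[OF t bv_Pobj[OF gens_basis[OF that(2)]]] .
    then have "\<exists>g. g \<in> G ?t \<and> \<pi> ?t g = \<phi> ?t (bv (gens i (VV m fs)))" using surj t by (metis imageE)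
    then show ?thesis unfolding gen_def by (rule someI_ex)
  qed
  have XG: "X m fs \<in> G m" if "m \<ge> 1" "fs \<in> basis m i" for m fs
    unfolding X_def using Gmap[OF that(1) VV_card[OF that(1)] qq_surjs] gen[OF that] by blast
  have psiG: "\<psi> m c \<in> G m" if "m \<ge> 1" for m c
    unfolding \<psi>_def by (rule closed_sum[OF G0[OF that] Gadd[OF that]]) (auto intro: Gsc[OF that] XG[OF that])
  have psilin: "lin_on pscale sG (Pobj i m) (\<psi> m)" for m
    unfolding lin_on_def \<psi>_def
    by (auto simp: pscale_def vG.scale_left_distrib sum.distrib vG.scale_sum_right)
  have psibv: "\<psi> m (bv fs) = X m fs" if "fs \<in> basis m i" for m fs
  proof -
    have "\<psi> m (bv fs) = (\<Sum>fs'\<in>basis m i. if fs' = fs then X m fs' else 0)"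
      unfolding \<psi>_def bv_def by (rule sum.cong) auto
    then show ?thesis using that finite_basis[of m i] by simp
  qed
  have psinat: "\<psi> m (Pmap i m n f x) = Gm m n f (\<psi> n x)"
    if mn: "m \<ge> 1" "n \<ge> 1" and f: "f \<in> surjs m n" and x: "x \<in> Pobj i n" for m n f x
  proof (rule lin_unique[where ?h1.0 = "\<lambda>x. \<psi> m (Pmap i m n f x)" and ?h2.0 = "\<lambda>x. Gm m n f (\<psi> n x)", OF _ _ _ x])
    show "lin_on pscale sG (Pobj i n) (\<lambda>x. \<psi> m (Pmap i m n f x))"
      by (rule lin_on_comp[OF plin_lin_on[OF plin_Pmap] psilin])
         (auto intro: Pmap_Pobj[OF f] Pobj_add Pobj_scale)
    show "lin_on pscale sG (Pobj i n) (\<lambda>x. Gm m n f (\<psi> n x))"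
      by (rule lin_on_comp[OF psilin Glin[OF mn f]]) (auto intro: psiG[OF mn(2)] Pobj_add Pobj_scale)
  next
    fix fs assume fs: "fs \<in> basis n i"
    let ?V = "VV n fs" let ?t = "card (VV n fs)"
    have t: "?t \<ge> 1" using VV_card[OF mn(2)] .
    have "\<psi> m (Pmap i m n f (bv fs)) = X m (mapc m f fs)"
      by (simp add: Pmap_bv[OF fs] psibv[OF mapc_basis[OF f fs]])
    also have "\<dots> = Gm m ?t (restrict (qq n fs \<circ> f) {0..<m}) (gen ?V)"
      by (simp add: X_def VV_mapc[OF f] qq_mapc[OF f])
    also have "\<dots> = Gm m n f (Gm n ?t (qq n fs) (gen ?V))"
      by (rule Gcomp[OF mn t f qq_surjs]) (use gen[OF mn(2) fs] in blast)
    also have "\<dots> = Gm m n f (\<psi> n (bv fs))" by (simp add: psibv[OF fs] X_def)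
    finally show "\<psi> m (Pmap i m n f (bv fs)) = Gm m n f (\<psi> n (bv fs))" .
  qed
  have lift: "\<pi> m (\<psi> m x) = \<phi> m x" if m: "m \<ge> 1" and x: "x \<in> Pobj i m" for m x
  proof (rule lin_unique[where ?h1.0 = "\<lambda>x. \<pi> m (\<psi> m x)", OF _ philin[OF m x] _ x])
    show "lin_on pscale sH (Pobj i m) (\<lambda>x. \<pi> m (\<psi> m x))"
      by (rule lin_on_comp[OF psilin pilin[OF m G0[OF m]]]) (auto intro: psiG[OF m] Pobj_add Pobj_scale)
  next
    fix fs assume fs: "fs \<in> basis m i"
    let ?V = "VV m fs" let ?t = "card (VV m fs)"
    have t: "?t \<ge> 1" using VV_card[OF m] .
    have g: "gen ?V \<in> G ?t" using gen[OF m fs] by blast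
    have gb: "gens i ?V \<in> basis ?t i" by (rule gens_basis[OF fs])
    have "\<pi> m (\<psi> m (bv fs)) = \<pi> m (Gm m ?t (qq m fs) (gen ?V))" by (simp add: psibv[OF fs] X_def)
    also have "\<dots> = Hm m ?t (qq m fs) (\<pi> ?t (gen ?V))" by (rule pinat[OF m t qq_surjs g])
    also have "\<dots> = Hm m ?t (qq m fs) (\<phi> ?t (bv (gens i ?V)))" using gen[OF m fs] by simp
    also have "\<dots> = \<phi> m (Pmap i m ?t (qq m fs) (bv (gens i ?V)))"
      by (rule phinat[OF m t qq_surjs bv_Pobj[OF gb], symmetric])
    also have "\<dots> = \<phi> m (bv fs)" by (simp add: Pmap_bv[OF gb] mapc_gens[OF fs])
    finally show "\<pi> m (\<psi> m (bv fs)) = \<phi> m (bv fs)" .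
  qed
  have "nat_trans pscale (Pobj i) (Pmap i) sG G Gm \<psi>"
    unfolding nat_trans_def using psiG psilin psinat by blast
  then show "\<exists>\<psi>. nat_trans pscale (Pobj i) (Pmap i) sG G Gm \<psi> \<and> (\<forall>m\<ge>1. \<forall>x\<in>Pobj i m. \<pi> m (\<psi> m x) = \<phi> m x)"
    using lift by blast
qed


theorem lemma3p12:
  shows "(\<forall>i. is_functor pscale (Pobj i :: nat \<Rightarrow> ((nat \<Rightarrow> nat) list \<Rightarrow> 'k::field) set) (Pmap i))
    \<and> is_functor ((*) :: 'k \<Rightarrow> 'k \<Rightarrow> 'k) t1obj t1map
    \<and> (\<forall>i. nat_trans pscale (Pobj (Suc i) :: nat \<Rightarrow> ((nat \<Rightarrow> nat) list \<Rightarrow> 'k) set) (Pmap (Suc i))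
                     pscale (Pobj i) (Pmap i) (d (Suc i)))
    \<and> nat_trans pscale (Pobj 0 :: nat \<Rightarrow> ((nat \<Rightarrow> nat) list \<Rightarrow> 'k) set) (Pmap 0) (*) t1obj t1map aug
    \<and> (\<forall>m\<ge>1. aug m ` (Pobj 0 m :: ((nat \<Rightarrow> nat) list \<Rightarrow> 'k) set) = t1obj m)
    \<and> (\<forall>m\<ge>1. {c \<in> (Pobj 0 m :: ((nat \<Rightarrow> nat) list \<Rightarrow> 'k) set). aug m c = 0} = d 1 m ` Pobj 1 m)
    \<and> (\<forall>m\<ge>1. \<forall>i\<ge>1. {c \<in> (Pobj i m :: ((nat \<Rightarrow> nat) list \<Rightarrow> 'k) set). d i m c = 0}
                      = d (Suc i) m ` Pobj (Suc i) m)
    \<and> (\<forall>i. \<forall>(sG :: 'k \<Rightarrow> 'b::ab_group_add \<Rightarrow> 'b) G Gm (sH :: 'k \<Rightarrow> 'c::ab_group_add \<Rightarrow> 'c) H Hm.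
          proj_against pscale (Pobj i :: nat \<Rightarrow> ((nat \<Rightarrow> nat) list \<Rightarrow> 'k) set) (Pmap i) sG G Gm sH H Hm)"
    by (intro conjI allI impI P_functor t1_functor d_nat aug_nat aug_image exact0 exact proj; assumption)

end
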